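(* Let $n\ge 2$, $F\in GL^+(n)$, $\mu>0$, $\mu_c\ge 0$, and consider $\widetilde W_{\mu,\mu_c}(\cdot;F):SO(n)\to\mathbb R$. Then: (i) A rotation $R\in SO(n)$ is a critical point of $\widetilde W_{\mu,\mu_c}(\cdot;F)$ if and only if $$(\mu-\mu_c)\big(FR^TFR^T-RF^TRF^T\big)=2\mu\,(FR^T-RF^T).$$ (ii) Let $X\in\mathcal M_{n\times n}(\mathbb R)$ with $\det X>0$ and put $R=X^TF^{-T}$. Then $R\in SO(n)$ and $R$ is a critical point of $\widetilde W_{\mu,\mu_c}(\cdot;F)$ if and only if $$(\mu-\mu_c)\big(X^2-(X^T)^2\big)=2\mu(X-X^T)\quad\text{and}\quad XX^T=FF^T .$$ (iii) Equivalently, with $X$ and $R$ as in (ii), $R\in SO(n)$ is a critical point if and only if $$(X-X^T)\big((\mu-\mu_c)(X+X^T)-2\mu\,\mathbb I_n\big)=(\mu-\mu_c)[X,X^T]\quad\text{and}\quad XX^T=FF^T,$$ where $[U,V]=UV-VU$. (Every $R\in SO(n)$ arises in this way, with $X=FR^T$.)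
   Context: For a square matrix $Y$, $\mathrm{sym}(Y)=\tfrac12(Y+Y^T)$, $\mathrm{skew}(Y)=\tfrac12(Y-Y^T)$, and $\|Y\|^2=\mathrm{tr}(Y^TY)$ is the Frobenius norm. $GL^+(n)$ denotes real $n\times n$ matrices with positive determinant. For $F\in GL^+(n)$, $\mu>0$, $\mu_c\ge0$, the generalized free energy is $\widetilde W_{\mu,\mu_c}(R;F)=\mu\|\mathrm{sym}(R^TF-\mathbb I_n)\|^2+\mu_c\|\mathrm{skew}(R^TF-\mathbb I_n)\|^2$ for $R\in SO(n)$. A critical point means a critical point of this function restricted to the smooth submanifold $SO(n)\subset\mathcal M_{n\times n}(\mathbb R)$. *)

theory Defs
  imports "HOL-Analysis.Analysis"
begin

type_synonym 'n sqmat = "real^'n^'n"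

definition SOn :: "'n::finite sqmat set" where
  "SOn = {R. rotation_matrix R}"

definition msym :: "'n::finite sqmat \<Rightarrow> 'n sqmat" where
  "msym Y = (1/2) *\<^sub>R (Y + transpose Y)"

definition mskew :: "'n::finite sqmat \<Rightarrow> 'n sqmat" where
  "mskew Y = (1/2) *\<^sub>R (Y - transpose Y)"

definition frob_sq :: "'n::finite sqmat \<Rightarrow> real" where
  "frob_sq Y = trace (transpose Y ** Y)"

definition Wgen :: "real \<Rightarrow> real \<Rightarrow> 'n::finite sqmat \<Rightarrow> 'n sqmat \<Rightarrow> real" where
  "Wgen mu muc F R =
     mu * frob_sq (msym (transpose R ** F - mat 1)) + muc * frob_sq (mskew (transpose R ** F - mat 1))"

definition crit_on :: "('n::finite sqmat \<Rightarrow> real) \<Rightarrow> 'n sqmat set \<Rightarrow> 'n sqmat \<Rightarrow> bool" where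
  "crit_on f M R \<longleftrightarrow> R \<in> M \<and>
     (\<forall>\<gamma> v. (\<forall>t. \<gamma> t \<in> M) \<and> \<gamma> 0 = R \<and> (\<gamma> has_vector_derivative v) (at 0)
        \<longrightarrow> ((\<lambda>t. f (\<gamma> t)) has_real_derivative 0) (at 0))"

end

theory Submission
  imports Defs
begin


type_synonym 'n M = "real^'n^'n"

lemma mm_add_r: "((A::'n::finite M) + B) ** C = A ** C + B ** C"
  by (simp add: matrix_matrix_mult_def vec_eq_iff sum.distrib distrib_right)
lemma mm_diff_l: "(A::'n::finite M) ** (B - C) = A ** B - A ** C"
  by (simp add: matrix_matrix_mult_def vec_eq_iff sum_subtractf right_diff_distrib)
lemma mm_diff_r: "((A::'n::finite M) - B) ** C = A ** C - B ** C"
  by (simp add: matrix_matrix_mult_def vec_eq_iff sum_subtractf left_diff_distrib)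
lemma mm_scale_l: "(k *\<^sub>R (A::'n::finite M)) ** B = k *\<^sub>R (A ** B)"
  by (simp add: scalar_matrix_assoc)
lemma mm_scale_r: "(A::'n::finite M) ** (k *\<^sub>R B) = k *\<^sub>R (A ** B)"
  by (simp add: matrix_scalar_ac scalar_matrix_assoc)
lemma mm_neg_l: "(- (A::'n::finite M)) ** B = - (A ** B)"
  by (simp add: matrix_matrix_mult_def vec_eq_iff sum_negf)
lemma mm_neg_r: "(A::'n::finite M) ** (- B) = - (A ** B)"
  by (simp add: matrix_matrix_mult_def vec_eq_iff sum_negf)
lemma tp_add: "transpose ((A::'n::finite M) + B) = transpose A + transpose B"
  by (simp add: transpose_def vec_eq_iff)
lemma tp_diff: "transpose ((A::'n::finite M) - B) = transpose A - transpose B"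
  by (simp add: transpose_def vec_eq_iff)
lemma tp_neg: "transpose (- (A::'n::finite M)) = - transpose A"
  by (simp add: transpose_def vec_eq_iff)
lemma tr_tp: "trace (transpose (A::'n::finite M)) = trace A"
  by (simp add: trace_def transpose_def)
lemma tr_scale: "trace (k *\<^sub>R (A::'n::finite M)) = k * trace A"
  by (simp add: trace_def sum_distrib_left)
lemma tr_neg: "trace (- (A::'n::finite M)) = - trace A"
  by (simp add: trace_def sum_negf)

lemmas mm_simps = matrix_add_ldistrib mm_add_r mm_diff_l mm_diff_r mm_scale_l mm_scale_r mm_neg_l mm_neg_r
  tp_add tp_diff tp_neg transpose_scalar trace_add trace_sub tr_scale tr_neg

lemma lin_tp: "bounded_linear (transpose :: 'n::finite M \<Rightarrow> 'n M)"
  by (rule linear_conv_bounded_linear[THEN iffD1], rule linearI) (simp_all add: tp_add transpose_scalar)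
lemma lin_tr: "bounded_linear (trace :: 'n::finite M \<Rightarrow> real)"
  by (rule linear_conv_bounded_linear[THEN iffD1], rule linearI) (simp_all add: trace_add tr_scale)
lemma lin_msym: "bounded_linear (msym :: 'n::finite M \<Rightarrow> 'n M)"
  by (rule linear_conv_bounded_linear[THEN iffD1], rule linearI) (simp_all add: msym_def tp_add transpose_scalar algebra_simps)
lemma lin_mskew: "bounded_linear (mskew :: 'n::finite M \<Rightarrow> 'n M)"
  by (rule linear_conv_bounded_linear[THEN iffD1], rule linearI) (simp_all add: mskew_def tp_add transpose_scalar algebra_simps)
lemma bil_mm: "bounded_bilinear ((**) :: 'n::finite M \<Rightarrow> 'n M \<Rightarrow> 'n M)"
  by (rule bilinear_conv_bounded_bilinear[THEN iffD1])
     (auto simp: bilinear_def intro!: linearI simp: matrix_add_ldistrib mm_add_r mm_scale_l mm_scale_r)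
lemma lin_ml: "bounded_linear (\<lambda>X::'n::finite M. (A::'n::finite M) ** X)"
  by (rule linear_conv_bounded_linear[THEN iffD1], rule linearI) (simp_all add: matrix_add_ldistrib mm_scale_r)
lemma lin_mr: "bounded_linear (\<lambda>X::'n::finite M. X ** (A::'n::finite M))"
  by (rule linear_conv_bounded_linear[THEN iffD1], rule linearI) (simp_all add: mm_add_r mm_scale_l)

lemma frob_deriv:
  fixes Z :: "real \<Rightarrow> 'n::finite M"
  assumes "(Z has_vector_derivative Z') (at 0)"
  shows "((\<lambda>t. frob_sq (Z t)) has_real_derivative 2 * trace (transpose (Z 0) ** Z')) (at 0)"
proof -
  have "((\<lambda>t. transpose (Z t)) has_vector_derivative transpose Z') (at 0)"
    using bounded_linear.has_vector_derivative[OF lin_tp assms] .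
  then have "((\<lambda>t. transpose (Z t) ** Z t) has_vector_derivative
      (transpose (Z 0) ** Z' + transpose Z' ** Z 0)) (at 0)"
    using bounded_bilinear.has_vector_derivative[OF bil_mm _ assms] by blast
  then have "((\<lambda>t. trace (transpose (Z t) ** Z t)) has_vector_derivative
      trace (transpose (Z 0) ** Z' + transpose Z' ** Z 0)) (at 0)"
    using bounded_linear.has_vector_derivative[OF lin_tr] by blast
  moreover have "trace (transpose Z' ** Z 0) = trace (transpose (Z 0) ** Z')"
    by (metis matrix_transpose_mul tr_tp transpose_transpose)
  ultimately show ?thesis
    by (simp add: frob_sq_def has_real_derivative_iff_has_vector_derivative trace_add)
qed

lemma tr_L1: "2 * trace (transpose (msym Y) ** msym V) = trace (Y ** V) + trace (transpose Y ** V)"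
  for Y V :: "'n::finite M"
proof -
  have a: "trace (transpose Y ** transpose V) = trace (Y ** V)"
    by (metis matrix_transpose_mul tr_tp trace_mul_sym)
  have b: "trace (Y ** transpose V) = trace (transpose Y ** V)"
    by (metis matrix_transpose_mul tr_tp trace_mul_sym transpose_transpose)
  show ?thesis unfolding msym_def using a b by (simp add: mm_simps algebra_simps)
qed

lemma tr_L2: "2 * trace (transpose (mskew Y) ** mskew V) = trace (transpose Y ** V) - trace (Y ** V)"
  for Y V :: "'n::finite M"
proof -
  have a: "trace (transpose Y ** transpose V) = trace (Y ** V)"
    by (metis matrix_transpose_mul tr_tp trace_mul_sym)
  have b: "trace (Y ** transpose V) = trace (transpose Y ** V)"
    by (metis matrix_transpose_mul tr_tp trace_mul_sym transpose_transpose)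
  show ?thesis unfolding mskew_def using a b by (simp add: mm_simps algebra_simps)
qed

lemma tr_skew_sym: "transpose A = - A \<Longrightarrow> transpose S = S \<Longrightarrow> trace (A ** S) = 0"
  for A S :: "'n::finite M"
  by (metis add.inverse_neutral equal_neg_zero matrix_transpose_mul mm_neg_r tr_neg tr_tp trace_mul_sym)

definition Mcrit :: "real \<Rightarrow> real \<Rightarrow> 'n::finite M \<Rightarrow> 'n M \<Rightarrow> 'n M" where
  "Mcrit mu muc F R = (2*mu) *\<^sub>R (transpose R ** F) - (mu - muc) *\<^sub>R ((transpose R ** F) ** (transpose R ** F))"

lemma W_deriv:
  fixes \<gamma> :: "real \<Rightarrow> 'n::finite M"
  assumes d: "(\<gamma> has_vector_derivative v) (at 0)" and g0: "\<gamma> 0 = R" and v: "v = R ** A"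
    and A: "transpose A = - A"
  shows "((\<lambda>t. Wgen mu muc F (\<gamma> t)) has_real_derivative trace (A ** Mcrit mu muc F R)) (at 0)"
proof -
  define U where "U = transpose R ** F"
  define V where "V = transpose v ** F"
  have Y: "((\<lambda>t. transpose (\<gamma> t) ** F - mat 1) has_vector_derivative V) (at 0)"
    unfolding V_def has_vector_derivative_diff_const
    using bounded_linear.has_vector_derivative[OF bounded_linear_compose[OF lin_mr lin_tp] d] by simp
  have S: "((\<lambda>t. msym (transpose (\<gamma> t) ** F - mat 1)) has_vector_derivative msym V) (at 0)"
    using bounded_linear.has_vector_derivative[OF lin_msym Y] .
  have K: "((\<lambda>t. mskew (transpose (\<gamma> t) ** F - mat 1)) has_vector_derivative mskew V) (at 0)"
    using bounded_linear.has_vector_derivative[OF lin_mskew Y] .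
  have D: "((\<lambda>t. Wgen mu muc F (\<gamma> t)) has_real_derivative
     mu * (2 * trace (transpose (msym (U - mat 1)) ** msym V)) +
     muc * (2 * trace (transpose (mskew (U - mat 1)) ** mskew V))) (at 0)"
    unfolding Wgen_def U_def
    using DERIV_add[OF DERIV_cmult[OF frob_deriv[OF S]] DERIV_cmult[OF frob_deriv[OF K]]] g0 by simp
  have V': "V = - (A ** U)"
    unfolding V_def U_def v by (simp add: matrix_transpose_mul A mm_neg_l matrix_mul_assoc)
  have t1: "trace (U ** (A ** U)) = trace (A ** (U ** U))"
    by (metis matrix_mul_assoc trace_mul_sym)
  have t2: "trace (transpose U ** (A ** U)) = 0"
  proof -
    have "trace (transpose U ** (A ** U)) = trace (A ** (U ** transpose U))"
      by (metis matrix_mul_assoc trace_mul_sym)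
    also have "\<dots> = 0" by (rule tr_skew_sym[OF A]) (simp add: matrix_transpose_mul)
    finally show ?thesis .
  qed
  have e: "mu * (2 * trace (transpose (msym (U - mat 1)) ** msym V)) +
     muc * (2 * trace (transpose (mskew (U - mat 1)) ** mskew V)) = trace (A ** Mcrit mu muc F R)"
    unfolding tr_L1 tr_L2 Mcrit_def U_def[symmetric] V'
    using t1 t2 by (simp add: mm_simps algebra_simps)
  show ?thesis using D e by simp
qed

definition E :: "'n::finite \<Rightarrow> 'n \<Rightarrow> 'n M" where
  "E a b = (\<chi> r c. if r = a \<and> c = b then 1 else 0)"

lemma E_mult: "E a b ** E c d = (if b = c then E a d else 0)"
proof -
  have "(\<Sum>k\<in>UNIV. (if r = a \<and> k = b then 1 else 0) * (if k = c \<and> s = d then 1 else 0))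
     = (if b = c \<and> r = a \<and> s = d then 1 else (0::real))" for r s
  proof -
    have "(\<lambda>k. (if r = a \<and> k = b then 1 else 0) * (if k = c \<and> s = d then 1 else (0::real)))
       = (\<lambda>k. if k = b then (if b = c \<and> r = a \<and> s = d then 1 else 0) else 0)"
      by auto
    then show ?thesis by (simp only:) (simp add: sum.delta)
  qed
  then show ?thesis
    unfolding E_def matrix_matrix_mult_def vec_eq_iff by simp
qed

lemma E_tp: "transpose (E a b) = E b a"
  by (auto simp: E_def transpose_def vec_eq_iff)

lemma tr_E: "trace (E a b ** X) = X $ b $ a"
proof -
  have inner: "(\<Sum>k\<in>UNIV. (if i = a \<and> k = b then 1 else 0) * X $ k $ i) = (if i = a then X $ b $ a else 0)" for i
  proof -
    have "(\<lambda>k. (if i = a \<and> k = b then 1 else 0) * X $ k $ i) = (\<lambda>k. if k = b then (if i = a then X $ b $ a else 0) else 0)"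
      by auto
    then show ?thesis by (simp only:) (simp add: sum.delta)
  qed
  show ?thesis
    unfolding E_def trace_def matrix_matrix_mult_def vec_lambda_beta inner by (simp add: sum.delta)
qed

definition Giv :: "'n::finite \<Rightarrow> 'n \<Rightarrow> real \<Rightarrow> 'n M" where
  "Giv i j t = mat 1 + (cos t - 1) *\<^sub>R (E i i + E j j) + sin t *\<^sub>R (E j i - E i j)"

lemma Giv_orth:
  fixes i j :: "'n::finite"
  assumes "i \<noteq> j"
  shows "orthogonal_matrix (Giv i j t)"
proof -
  define P :: "'n M" where "P = E i i + E j j"
  define K :: "'n M" where "K = E j i - E i j"
  have PP: "P ** P = P" and PK: "P ** K = K" and KP: "K ** P = K" and KK: "K ** K = - P"
    and tP: "transpose P = P" and tK: "transpose K = - K"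
    using assms by (auto simp: P_def K_def mm_simps E_mult E_tp)
  have e: "cos t * cos t + sin t * sin t = 1"
    using sin_cos_squared_add[of t] by (simp add: algebra_simps power2_eq_square)
  have e2: "(cos t * cos t) *\<^sub>R P + (sin t * sin t) *\<^sub>R P = P"
    by (metis e scaleR_left_distrib scaleR_one)
  have "transpose (Giv i j t) ** Giv i j t = mat 1"
    unfolding Giv_def P_def[symmetric] K_def[symmetric]
    using e2 by (simp add: mm_simps PP PK KP KK tP tK algebra_simps)
  then show ?thesis by (simp add: orthogonal_matrix)
qed

lemma Giv_deriv: "(Giv i j has_vector_derivative (E j i - E i j)) (at 0)"
  unfolding Giv_def
  by (auto intro!: derivative_eq_intros)

lemma Giv0: "Giv i j 0 = mat 1"
  by (simp add: Giv_def)



lemma rot_orth: "R \<in> SOn \<Longrightarrow> transpose R ** R = mat 1 \<and> R ** transpose R = mat 1"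
  by (simp add: SOn_def rotation_matrix_def orthogonal_matrix_def)

lemma crit_iff:
  fixes F R :: "'n::finite M"
  assumes R: "R \<in> SOn"
  shows "crit_on (Wgen mu muc F) SOn R \<longleftrightarrow> transpose (Mcrit mu muc F R) = Mcrit mu muc F R"
proof
  assume c: "crit_on (Wgen mu muc F) SOn R"
  define M where "M = Mcrit mu muc F R"
  have ij: "M $ i $ j = M $ j $ i" if ij: "i \<noteq> j" for i j
  proof -
    define K where "K = E j i - E i j"
    define \<gamma> where "\<gamma> t = R ** (Giv i j t ** Giv i j t)" for t
    have in_SO: "\<gamma> t \<in> SOn" for t
    proof -
      have o: "orthogonal_matrix (Giv i j t)" using Giv_orth[OF ij] .
      have "det (Giv i j t) = 1 \<or> det (Giv i j t) = -1" using det_orthogonal_matrix[OF o] .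
      then have "det (Giv i j t ** Giv i j t) = 1" by (auto simp: det_mul)
      moreover have "orthogonal_matrix (Giv i j t ** Giv i j t)" using orthogonal_matrix_mul[OF o o] .
      moreover have "orthogonal_matrix R" "det R = 1" using R by (auto simp: SOn_def rotation_matrix_def)
      ultimately have "orthogonal_matrix (R ** (Giv i j t ** Giv i j t))"
        and "det (R ** (Giv i j t ** Giv i j t)) = 1"
        by (simp_all add: orthogonal_matrix_mul det_mul)
      then show ?thesis by (simp add: \<gamma>_def SOn_def rotation_matrix_def)
    qed
    have g0: "\<gamma> 0 = R" by (simp add: \<gamma>_def Giv0)
    have dG: "((\<lambda>t. Giv i j t ** Giv i j t) has_vector_derivative (K + K)) (at 0)"
      using bounded_bilinear.has_vector_derivative[OF bil_mm Giv_deriv[of i j] Giv_deriv[of i j]]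
      by (simp only: Giv0 matrix_mul_lid matrix_mul_rid K_def)
    have dg: "(\<gamma> has_vector_derivative R ** (K + K)) (at 0)"
      unfolding \<gamma>_def using bounded_linear.has_vector_derivative[OF lin_ml dG] .
    have tK: "transpose (K + K) = - (K + K)"
      by (simp only: K_def tp_add tp_diff E_tp minus_add_distrib minus_diff_eq)
    have d1: "((\<lambda>t. Wgen mu muc F (\<gamma> t)) has_real_derivative trace ((K + K) ** M)) (at 0)"
      unfolding M_def by (rule W_deriv[OF dg g0 refl tK])
    have d2: "((\<lambda>t. Wgen mu muc F (\<gamma> t)) has_real_derivative 0) (at 0)"
      using c in_SO g0 dg unfolding crit_on_def by blast
    have "trace ((K + K) ** M) = 0" using DERIV_unique[OF d1 d2] .
    then show ?thesis unfolding K_def mm_add_r mm_diff_r trace_add trace_sub tr_E by simp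
  qed
  show "transpose (Mcrit mu muc F R) = Mcrit mu muc F R"
    unfolding M_def[symmetric] vec_eq_iff
  proof (intro allI)
    fix a b
    show "transpose M $ a $ b = M $ a $ b"
      by (cases "a = b") (simp add: transpose_def, simp add: transpose_def ij[of b a])
  qed
next
  assume s: "transpose (Mcrit mu muc F R) = Mcrit mu muc F R"
  have o: "transpose R ** R = mat 1" "R ** transpose R = mat 1" using rot_orth[OF R] by auto
  show "crit_on (Wgen mu muc F) SOn R"
    unfolding crit_on_def
  proof (intro conjI allI impI)
    show "R \<in> SOn" by fact
    fix \<gamma> v
    assume a: "(\<forall>t. \<gamma> t \<in> SOn) \<and> \<gamma> 0 = R \<and> (\<gamma> has_vector_derivative v) (at 0)"
    then have g0: "\<gamma> 0 = R" and d: "(\<gamma> has_vector_derivative v) (at 0)" by auto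
    have c1: "((\<lambda>t. transpose (\<gamma> t) ** \<gamma> t) has_vector_derivative
         (transpose R ** v + transpose v ** R)) (at 0)"
      using bounded_bilinear.has_vector_derivative[OF bil_mm bounded_linear.has_vector_derivative[OF lin_tp d] d]
      unfolding g0 .
    have "(\<lambda>t. transpose (\<gamma> t) ** \<gamma> t) = (\<lambda>t. mat 1)"
      using a rot_orth by auto
    then have c2: "((\<lambda>t. transpose (\<gamma> t) ** \<gamma> t) has_vector_derivative 0) (at 0)" by simp
    have z: "transpose R ** v + transpose v ** R = 0" using vector_derivative_unique_at[OF c1 c2] .
    define A where "A = transpose R ** v"
    have tA: "transpose A = - A" unfolding A_def matrix_transpose_mul transpose_transpose
      by (metis z add.commute eq_neg_iff_add_eq_0)
    have vA: "v = R ** A" unfolding A_def by (simp add: matrix_mul_assoc o)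
    have "((\<lambda>t. Wgen mu muc F (\<gamma> t)) has_real_derivative trace (A ** Mcrit mu muc F R)) (at 0)"
      using W_deriv[OF d g0 vA tA] .
    moreover have "trace (A ** Mcrit mu muc F R) = 0" using tr_skew_sym[OF tA s] .
    ultimately show "((\<lambda>t. Wgen mu muc F (\<gamma> t)) has_real_derivative 0) (at 0)" by simp
  qed
qed

lemma sym_iff:
  fixes F R :: "'n::finite M"
  assumes o1: "transpose R ** R = mat 1" and o2: "R ** transpose R = mat 1"
  shows "transpose (Mcrit mu muc F R) = Mcrit mu muc F R \<longleftrightarrow>
     (mu - muc) *\<^sub>R (F ** transpose R ** F ** transpose R - R ** transpose F ** R ** transpose F)
          = (2 * mu) *\<^sub>R (F ** transpose R - R ** transpose F)"
proof -
  define N where "N = (2*mu) *\<^sub>R F - (mu - muc) *\<^sub>R (F ** transpose R ** F)"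
  have MN: "Mcrit mu muc F R = transpose R ** N"
    unfolding Mcrit_def N_def by (simp add: mm_simps matrix_mul_assoc)
  have tM: "transpose (Mcrit mu muc F R) = transpose N ** R"
    unfolding MN by (simp add: matrix_transpose_mul)
  have 1: "transpose N ** R = transpose R ** N \<longleftrightarrow> N ** transpose R = R ** transpose N"
  proof
    assume h: "transpose N ** R = transpose R ** N"
    have "N ** transpose R = R ** (transpose R ** N) ** transpose R"
      by (simp add: matrix_mul_assoc o2)
    also have "\<dots> = R ** (transpose N ** R) ** transpose R" by (simp add: h)
    also have "\<dots> = R ** transpose N" by (simp add: matrix_mul_assoc[symmetric] o2)
    finally show "N ** transpose R = R ** transpose N" .
  next
    assume h: "N ** transpose R = R ** transpose N"
    have "transpose N ** R = transpose R ** (R ** transpose N) ** R"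
      by (simp add: matrix_mul_assoc o1)
    also have "\<dots> = transpose R ** (N ** transpose R) ** R" by (simp add: h)
    also have "\<dots> = transpose R ** N" by (simp add: matrix_mul_assoc[symmetric] o1)
    finally show "transpose N ** R = transpose R ** N" .
  qed
  have 2: "N ** transpose R - R ** transpose N =
     (2 * mu) *\<^sub>R (F ** transpose R - R ** transpose F) -
     (mu - muc) *\<^sub>R (F ** transpose R ** F ** transpose R - R ** transpose F ** R ** transpose F)"
  proof -
    have a: "N ** transpose R = (2*mu) *\<^sub>R (F ** transpose R) - (mu - muc) *\<^sub>R (F ** transpose R ** F ** transpose R)"
      by (simp add: N_def mm_diff_r mm_scale_l)
    have b: "transpose N = (2*mu) *\<^sub>R transpose F - (mu - muc) *\<^sub>R (transpose F ** R ** transpose F)"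
      by (simp add: N_def tp_diff transpose_scalar matrix_transpose_mul matrix_mul_assoc)
    have c: "R ** transpose N = (2*mu) *\<^sub>R (R ** transpose F) - (mu - muc) *\<^sub>R (R ** transpose F ** R ** transpose F)"
      by (simp add: b mm_diff_l mm_scale_r matrix_mul_assoc)
    show ?thesis unfolding a c by (simp add: scaleR_diff_right)
  qed
  have s1: "transpose (Mcrit mu muc F R) = Mcrit mu muc F R \<longleftrightarrow> N ** transpose R = R ** transpose N"
    unfolding tM by (simp only: MN 1)
  have s2: "N ** transpose R = R ** transpose N \<longleftrightarrow> N ** transpose R - R ** transpose N = 0"
    by (rule eq_iff_diff_eq_0)
  show ?thesis unfolding s1 s2 2 right_minus_eq by auto
qed



lemma sandwich: "B ** A = mat 1 \<Longrightarrow> C ** D = mat 1 \<Longrightarrow> B ** (A ** Q ** C) ** D = (Q::'n::finite M)"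
proof -
  assume h: "B ** A = mat 1" "C ** D = mat 1"
  have "B ** (A ** Q ** C) ** D = (B ** A) ** Q ** (C ** D)" by (simp add: matrix_mul_assoc)
  then show ?thesis using h by simp
qed

theorem mainTheorem1:
  fixes F :: "real^'n^'n" and mu muc :: real
  assumes "CARD('n) \<ge> 2" and "det F > 0" and "mu > 0" and "muc \<ge> 0"
  shows
    "(\<forall>R \<in> SOn. crit_on (Wgen mu muc F) SOn R \<longleftrightarrow>
        (mu - muc) *\<^sub>R (F ** transpose R ** F ** transpose R - R ** transpose F ** R ** transpose F)
          = (2 * mu) *\<^sub>R (F ** transpose R - R ** transpose F))
     \<and> (\<forall>X :: real^'n^'n. det X > 0 \<longrightarrow>
        (let R = transpose X ** matrix_inv (transpose F) in
          (R \<in> SOn \<and> crit_on (Wgen mu muc F) SOn R) \<longleftrightarrow>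
          ((mu - muc) *\<^sub>R (X ** X - transpose X ** transpose X) = (2 * mu) *\<^sub>R (X - transpose X)
           \<and> X ** transpose X = F ** transpose F)))
     \<and> (\<forall>X :: real^'n^'n. det X > 0 \<longrightarrow>
        (let R = transpose X ** matrix_inv (transpose F) in
          (R \<in> SOn \<and> crit_on (Wgen mu muc F) SOn R) \<longleftrightarrow>
          ((X - transpose X) ** ((mu - muc) *\<^sub>R (X + transpose X) - (2 * mu) *\<^sub>R mat 1)
             = (mu - muc) *\<^sub>R (X ** transpose X - transpose X ** X)
           \<and> X ** transpose X = F ** transpose F)))
     \<and> (\<forall>R \<in> SOn. det (F ** transpose R) > 0 \<and>
          transpose (F ** transpose R) ** matrix_inv (transpose F) = R)"
proof -
  define Fi where "Fi = matrix_inv (transpose F)"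
  have dF: "det (transpose F) \<noteq> 0" using assms(2) by simp
  have invF: "invertible (transpose F)" using dF by (simp add: invertible_det_nz)
  have inv: "transpose F ** Fi = mat 1 \<and> Fi ** transpose F = mat 1"
    unfolding Fi_def matrix_inv_def using invF[unfolded invertible_def] by (rule someI_ex)
  then have i1: "transpose F ** Fi = mat 1" and i2: "Fi ** transpose F = mat 1" by auto
  have i3: "transpose Fi ** F = mat 1"
    using arg_cong[OF i1, of transpose] by (simp add: matrix_transpose_mul)
  have "det (transpose F ** Fi) = 1" using i1 by simp
  then have "det F * det Fi = 1" by (simp add: det_mul)
  then have dFi: "det Fi > 0" using assms(2)
    by (metis zero_less_mult_pos zero_less_one)
  have P1: "\<forall>R \<in> SOn. crit_on (Wgen mu muc F) SOn R \<longleftrightarrow>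
        (mu - muc) *\<^sub>R (F ** transpose R ** F ** transpose R - R ** transpose F ** R ** transpose F)
          = (2 * mu) *\<^sub>R (F ** transpose R - R ** transpose F)"
  proof
    fix R :: "'n M" assume R: "R \<in> SOn"
    show "crit_on (Wgen mu muc F) SOn R \<longleftrightarrow>
        (mu - muc) *\<^sub>R (F ** transpose R ** F ** transpose R - R ** transpose F ** R ** transpose F)
          = (2 * mu) *\<^sub>R (F ** transpose R - R ** transpose F)"
      using crit_iff[OF R] sym_iff rot_orth[OF R] by blast
  qed
  have key: "(R \<in> SOn \<and> crit_on (Wgen mu muc F) SOn R) \<longleftrightarrow>
          ((mu - muc) *\<^sub>R (X ** X - transpose X ** transpose X) = (2 * mu) *\<^sub>R (X - transpose X)
           \<and> X ** transpose X = F ** transpose F)"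
    if dX: "det X > 0" and Rdef: "R = transpose X ** Fi" for X R :: "'n M"
  proof -
    have RF: "R ** transpose F = transpose X" unfolding Rdef
      by (metis i2 matrix_mul_assoc matrix_mul_rid)
    have XF: "X = F ** transpose R"
      by (metis RF matrix_transpose_mul transpose_transpose)
    have XX: "X ** X = F ** transpose R ** F ** transpose R" by (simp add: XF matrix_mul_assoc)
    have XtXt: "transpose X ** transpose X = R ** transpose F ** R ** transpose F"
      by (simp add: RF[symmetric] matrix_mul_assoc)
    have lin: "X - transpose X = F ** transpose R - R ** transpose F" using XF RF by simp
    have ce: "((mu - muc) *\<^sub>R (X ** X - transpose X ** transpose X) = (2 * mu) *\<^sub>R (X - transpose X))
      \<longleftrightarrow> (mu - muc) *\<^sub>R (F ** transpose R ** F ** transpose R - R ** transpose F ** R ** transpose F)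
          = (2 * mu) *\<^sub>R (F ** transpose R - R ** transpose F)"
      by (simp only: XX XtXt lin)
    have XXt: "X ** transpose X = F ** (transpose R ** R) ** transpose F"
      by (simp add: XF matrix_transpose_mul matrix_mul_assoc)
    show ?thesis
    proof
      assume h: "R \<in> SOn \<and> crit_on (Wgen mu muc F) SOn R"
      have R: "R \<in> SOn" and cr: "crit_on (Wgen mu muc F) SOn R" using h by auto
      show "(mu - muc) *\<^sub>R (X ** X - transpose X ** transpose X) = (2 * mu) *\<^sub>R (X - transpose X)
           \<and> X ** transpose X = F ** transpose F"
      proof (rule conjI)
        have R: "R \<in> SOn" and cr: "crit_on (Wgen mu muc F) SOn R" using h by auto
        show "(mu - muc) *\<^sub>R (X ** X - transpose X ** transpose X) = (2 * mu) *\<^sub>R (X - transpose X)"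
          using P1 R cr ce by blast
        show "X ** transpose X = F ** transpose F" using XXt rot_orth[OF R] by simp
      qed
    next
      assume h: "(mu - muc) *\<^sub>R (X ** X - transpose X ** transpose X) = (2 * mu) *\<^sub>R (X - transpose X)
           \<and> X ** transpose X = F ** transpose F"
      have "transpose R ** R = transpose Fi ** (F ** (transpose R ** R) ** transpose F) ** Fi"
        using sandwich[OF i3 i1] by simp
      also have "\<dots> = transpose Fi ** (F ** mat 1 ** transpose F) ** Fi" using h XXt by simp
      also have "\<dots> = mat 1" using sandwich[OF i3 i1] .
      finally have o: "orthogonal_matrix R" by (simp add: orthogonal_matrix)
      have "det R > 0" unfolding Rdef using dX dFi by (simp add: det_mul)
      then have "det R = 1" using det_orthogonal_matrix[OF o] by auto
      then have R: "R \<in> SOn" using o by (simp add: SOn_def rotation_matrix_def)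
      then show "R \<in> SOn \<and> crit_on (Wgen mu muc F) SOn R" using P1 ce h by auto
    qed
  qed
  have eq3: "((X - transpose X) ** ((mu - muc) *\<^sub>R (X + transpose X) - (2 * mu) *\<^sub>R mat 1)
             = (mu - muc) *\<^sub>R (X ** transpose X - transpose X ** X))
     \<longleftrightarrow> (mu - muc) *\<^sub>R (X ** X - transpose X ** transpose X) = (2 * mu) *\<^sub>R (X - transpose X)"
    for X :: "'n M"
  proof -
    have "(X - transpose X) ** ((mu - muc) *\<^sub>R (X + transpose X) - (2 * mu) *\<^sub>R mat 1)
          - (mu - muc) *\<^sub>R (X ** transpose X - transpose X ** X)
        = (mu - muc) *\<^sub>R (X ** X - transpose X ** transpose X) - (2 * mu) *\<^sub>R (X - transpose X)"
      by (simp add: mm_simps algebra_simps)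
    then show ?thesis by (metis eq_iff_diff_eq_0)
  qed
  have P4: "\<forall>R \<in> SOn. det (F ** transpose R) > 0 \<and> transpose (F ** transpose R) ** Fi = R"
  proof
    fix R :: "'n M" assume R: "R \<in> SOn"
    have "det R = 1" using R by (simp add: SOn_def rotation_matrix_def)
    then have "det (F ** transpose R) > 0" using assms(2) by (simp add: det_mul)
    moreover have "transpose (F ** transpose R) ** Fi = R"
      by (metis i1 matrix_mul_assoc matrix_mul_rid matrix_transpose_mul transpose_transpose)
    ultimately show "det (F ** transpose R) > 0 \<and> transpose (F ** transpose R) ** Fi = R" by blast
  qed
  show ?thesis
    unfolding Let_def Fi_def[symmetric]
    using P1 P4 key eq3 by blast
qed


end
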